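(* For positive integers $n,m$, the ideal $I=(x_1,\dots,x_n)(x_{n+1},\dots,x_{n+m})\subset K[x_1,\dots,x_{n+m}]$ (the edge ideal of the complete bipartite graph $K_{n,m}$) has homological linear quotients with respect to the lexicographic order induced by any ordering of the variables: for every $k\ge0$ and every ordering of the variables, $\mathrm{HS}_k(I)$ has linear quotients with respect to the induced lexicographic order.
   Context: A monomial ideal has linear quotients with respect to a monomial order if listing its minimal generators decreasingly, $u_1,\dots,u_m$, every $(u_1,\dots,u_{i-1}):u_i$ is generated by variables. $\mathrm{HS}_k(I)$ is the monomial ideal generated by $\mathbf x^{\mathbf a}$ for the $k$th multigraded shifts $\mathbf a$ of $I$ in its minimal multigraded free resolution; the zero ideal is regarded as having linear quotients. *)

theory Defs
  imports Main
begin

text \<open>Monomials in the variables x_0, ..., x_(N-1) are represented by their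
exponent vectors (functions nat => nat vanishing from N on). Divisibility of
monomials is the pointwise order on such functions. A monomial ideal is
represented by the set of (exponent vectors of) monomials it contains.\<close>

type_synonym mon = "nat \<Rightarrow> nat"

definition monomials :: "nat \<Rightarrow> mon set" where
  "monomials N = {a. \<forall>j\<ge>N. a j = 0}"

definition mideal :: "nat \<Rightarrow> mon set \<Rightarrow> mon set" where
  "mideal N G = {a \<in> monomials N. \<exists>g\<in>G. g \<le> a}"

definition mingens :: "mon set \<Rightarrow> mon set" where
  "mingens M = {u \<in> M. \<forall>v\<in>M. v \<le> u \<longrightarrow> v = u}"

definition var_mon :: "nat \<Rightarrow> mon" where
  "var_mon s = (\<lambda>j. if j = s then 1 else 0)"

text \<open>Lexicographic order induced by the ordering of the variables
  x_(\<sigma> 0) > x_(\<sigma> 1) > ... > x_(\<sigma> (N-1)): lex_gt N \<sigma> a b means a > b.\<close>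
definition lex_gt :: "nat \<Rightarrow> (nat \<Rightarrow> nat) \<Rightarrow> mon \<Rightarrow> mon \<Rightarrow> bool" where
  "lex_gt N \<sigma> a b \<longleftrightarrow>
     (\<exists>k<N. b (\<sigma> k) < a (\<sigma> k) \<and> (\<forall>i<k. a (\<sigma> i) = b (\<sigma> i)))"

definition mcolon :: "nat \<Rightarrow> mon set \<Rightarrow> mon \<Rightarrow> mon set" where
  "mcolon N M u = {w \<in> monomials N. (\<lambda>j. w j + u j) \<in> M}"

definition generated_by_variables :: "nat \<Rightarrow> mon set \<Rightarrow> bool" where
  "generated_by_variables N M \<longleftrightarrow> (\<exists>S\<subseteq>{..<N}. M = mideal N (var_mon ` S))"

definition has_linear_quotients :: "nat \<Rightarrow> (nat \<Rightarrow> nat) \<Rightarrow> mon set \<Rightarrow> bool" where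
  "has_linear_quotients N \<sigma> M \<longleftrightarrow>
     (\<forall>u\<in>mingens M.
        generated_by_variables N
          (mcolon N (mideal N {v \<in> mingens M. lex_gt N \<sigma> v u}) u))"

text \<open>Multidegree-a strand of the Koszul complex K(x) \<otimes> I (computing
  Tor_i(K, I)_a): basis in homological degree i given by the subsets F of the
  variables with |F| = i and x^(a - F) \<in> I.\<close>
definition kface :: "nat \<Rightarrow> mon set \<Rightarrow> mon \<Rightarrow> nat set \<Rightarrow> bool" where
  "kface N M a F \<longleftrightarrow> F \<subseteq> {..<N} \<and> (\<forall>j\<in>F. 1 \<le> a j) \<and>
     (\<lambda>j. a j - (if j \<in> F then 1 else 0)) \<in> M"

definition kchains :: "'k itself \<Rightarrow> nat \<Rightarrow> mon set \<Rightarrow> mon \<Rightarrow> nat \<Rightarrow> (nat set \<Rightarrow> 'k::comm_ring_1) set" where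
  "kchains _ N M a i = {c. \<forall>F. c F \<noteq> 0 \<longrightarrow> kface N M a F \<and> card F = i}"

text \<open>Koszul differential: e_F \<mapsto> \<Sum>_(j\<in>F) (-1)^|{l\<in>F. l<j}| x_j e_(F-{j}).\<close>
definition kbd :: "nat \<Rightarrow> (nat set \<Rightarrow> 'k::comm_ring_1) \<Rightarrow> (nat set \<Rightarrow> 'k)" where
  "kbd N c = (\<lambda>G. \<Sum>j\<in>{..<N} - G. (-1) ^ card {l\<in>G. l < j} * c (insert j G))"

text \<open>The multigraded Betti number \<beta>_(i,a)(I) = dim_K Tor_i(K, I)_a is nonzero,
  i.e. a is an i-th multigraded shift of I in its minimal multigraded free
  resolution over K[x_0..x_(N-1)].\<close>
definition betti_nonzero :: "'k::field itself \<Rightarrow> nat \<Rightarrow> mon set \<Rightarrow> nat \<Rightarrow> mon \<Rightarrow> bool" where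
  "betti_nonzero K N M i a \<longleftrightarrow>
     (\<exists>z\<in>kchains K N M a i. kbd N z = (\<lambda>_. 0) \<and>
        \<not> (\<exists>w\<in>kchains K N M a (Suc i). kbd N w = z))"

definition HS :: "'k::field itself \<Rightarrow> nat \<Rightarrow> mon set \<Rightarrow> nat \<Rightarrow> mon set" where
  "HS K N M k = mideal N {a \<in> monomials N. betti_nonzero K N M k a}"

end

theory Submission
  imports Defs
begin

abbreviation I0 :: "nat \<Rightarrow> nat \<Rightarrow> mon set" where
  "I0 n m \<equiv> mideal (n+m) {(\<lambda>l. var_mon i l + var_mon j l) | i j. i < n \<and> n \<le> j \<and> j < n+m}"

lemma memI: "b \<in> I0 n m \<longleftrightarrow> b \<in> monomials (n+m) \<and> (\<exists>i<n. 1 \<le> b i) \<and> (\<exists>j. n \<le> j \<and> j < n+m \<and> 1 \<le> b j)"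
proof
  assume "b \<in> I0 n m"
  then obtain i j where b: "b \<in> monomials (n+m)" "i<n" "n \<le> j" "j<n+m" "(\<lambda>l. var_mon i l + var_mon j l) \<le> b"
    unfolding mideal_def by blast
  from b(5) have "var_mon i i + var_mon j i \<le> b i" "var_mon i j + var_mon j j \<le> b j" by (auto simp: le_fun_def)
  with b show "b \<in> monomials (n+m) \<and> (\<exists>i<n. 1 \<le> b i) \<and> (\<exists>j. n \<le> j \<and> j < n+m \<and> 1 \<le> b j)"
    by (auto simp: var_mon_def)
next
  assume "b \<in> monomials (n+m) \<and> (\<exists>i<n. 1 \<le> b i) \<and> (\<exists>j. n \<le> j \<and> j < n+m \<and> 1 \<le> b j)"
  then obtain i j where b: "b \<in> monomials (n+m)" "i<n" "n \<le> j" "j<n+m" "1 \<le> b i" "1 \<le> b j" by blast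
  have "(\<lambda>l. var_mon i l + var_mon j l) \<le> b"
    using b by (auto simp: le_fun_def var_mon_def)
  then show "b \<in> I0 n m" unfolding mideal_def using b by blast
qed

definition sg :: "nat set \<Rightarrow> nat \<Rightarrow> 'k::comm_ring_1" where
  "sg G j = (-1) ^ card {l\<in>G. l<j}"

lemma kbd_sg: "kbd N c G = (\<Sum>j\<in>{..<N} - G. sg G j * c (insert j G))"
  unfolding kbd_def sg_def by simp

lemma sg_sq: "sg G j * sg G j = (1::'k::comm_ring_1)"
  unfolding sg_def by (simp flip: power_mult_distrib)

lemma sg_nz: "sg G j \<noteq> (0::'k::comm_ring_1)"
  using sg_sq[of G j] by (metis mult_zero_left zero_neq_one)

lemma sg_insert: "x \<notin> G \<Longrightarrow> sg (insert x G) j = (if x < j then - sg G j else (sg G j :: 'k::comm_ring_1))"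
proof -
  assume x: "x \<notin> G"
  have fin: "finite {l\<in>G. l<j}" by (rule finite_subset[of _ "{..<j}"]) auto
  show ?thesis
  proof (cases "x < j")
    case True
    then have "{l\<in>insert x G. l<j} = insert x {l\<in>G. l<j}" by auto
    then show ?thesis using True x fin by (simp add: sg_def)
  next
    case False
    then have "{l\<in>insert x G. l<j} = {l\<in>G. l<j}" by auto
    then show ?thesis using False by (simp add: sg_def)
  qed
qed

definition Lc :: "nat \<Rightarrow> (nat set \<Rightarrow> 'k::comm_ring_1) \<Rightarrow> nat set \<Rightarrow> 'k" where
  "Lc c z F = (if c \<in> F then sg (F - {c}) c * z (F - {c}) else 0)"

lemma kbd_Lc:
  fixes z :: "nat set \<Rightarrow> 'k::comm_ring_1"
  assumes c: "c < N" and cyc: "kbd N z = (\<lambda>_. 0)"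
  shows "kbd N (Lc c z) = z"
proof (rule ext)
  fix G
  show "kbd N (Lc c z) G = z G"
  proof (cases "c \<in> G")
    case False
    have "kbd N (Lc c z) G = (\<Sum>j\<in>{..<N}-G. if j = c then sg G c * (sg G c * z G) else 0)"
      unfolding kbd_sg using False by (intro sum.cong) (auto simp: Lc_def)
    also have "\<dots> = sg G c * (sg G c * z G)" using c False by simp
    also have "\<dots> = z G" by (simp add: mult.assoc[symmetric] sg_sq)
    finally show ?thesis .
  next
    case True
    define H where "H = G - {c}"
    have G: "G = insert c H" "c \<notin> H" using True unfolding H_def by auto
    have split: "{..<N}-H = insert c ({..<N}-G)" "c \<notin> {..<N}-G" using c G by auto
    have "kbd N z H = 0" using cyc by simp
    then have "sg H c * z G + (\<Sum>j\<in>{..<N}-G. sg H j * z (insert j H)) = 0"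
      unfolding kbd_sg split using split(2) G(1) by simp
    then have eq: "(\<Sum>j\<in>{..<N}-G. sg H j * z (insert j H)) = - (sg H c * z G)"
      by (simp add: eq_neg_iff_add_eq_0 add.commute)
    have "kbd N (Lc c z) G = (\<Sum>j\<in>{..<N}-G. - sg H c * (sg H j * z (insert j H)))"
      unfolding kbd_sg
    proof (intro sum.cong refl)
      fix j assume j: "j \<in> {..<N} - G"
      then have jc: "j \<noteq> c" "j \<notin> H" using G by auto
      have e: "insert j G - {c} = insert j H" using jc G by auto
      show "sg G j * Lc c z (insert j G) = - sg H c * (sg H j * z (insert j H))"
        unfolding Lc_def e using jc G
        by (cases "c < j") (auto simp: sg_insert)
    qed
    also have "\<dots> = - sg H c * (\<Sum>j\<in>{..<N}-G. sg H j * z (insert j H))"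
      by (simp add: sum_distrib_left)
    also have "\<dots> = sg H c * sg H c * z G" unfolding eq by simp
    also have "\<dots> = z G" by (simp add: sg_sq)
    finally show ?thesis .
  qed
qed


lemma kface_I0:
  "kface (n+m) (I0 n m) a F \<longleftrightarrow> F \<subseteq> {..<n+m} \<and> (\<forall>j\<in>F. 1 \<le> a j) \<and>
     (\<lambda>j. a j - (if j \<in> F then 1 else 0)) \<in> monomials (n+m) \<and>
     (\<exists>i<n. 1 \<le> a i - (if i \<in> F then 1 else 0)) \<and>
     (\<exists>j. n \<le> j \<and> j < n+m \<and> 1 \<le> a j - (if j \<in> F then 1 else 0))"
  unfolding kface_def memI by simp

lemma Lc_chains:
  fixes z :: "nat set \<Rightarrow> 'k::comm_ring_1"
  assumes c: "c < n+m" and ac: "2 \<le> a c" and z: "z \<in> kchains K (n+m) (I0 n m) a i"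
  shows "Lc c z \<in> kchains K (n+m) (I0 n m) a (Suc i)"
  unfolding kchains_def
proof (intro CollectI allI impI)
  fix F assume nz: "Lc c z F \<noteq> 0"
  then have cF: "c \<in> F" and zF: "z (F - {c}) \<noteq> 0" by (auto simp: Lc_def split: if_splits)
  with z have kf: "kface (n+m) (I0 n m) a (F - {c})" and cd: "card (F - {c}) = i"
    unfolding kchains_def by auto
  from kf have sub: "F - {c} \<subseteq> {..<n+m}" by (simp add: kface_I0)
  then have Fsub: "F \<subseteq> {..<n+m}" using c by auto
  then have finF: "finite F" by (rule finite_subset) simp
  have "card F = Suc i" using cd card.remove[OF finF cF] by simp
  moreover have "kface (n+m) (I0 n m) a F"
  proof -
    from kf obtain i0 j0 where
      mon: "(\<lambda>j. a j - (if j \<in> F - {c} then 1 else 0)) \<in> monomials (n+m)" and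
      i0: "i0 < n" "1 \<le> a i0 - (if i0 \<in> F - {c} then 1 else 0)" and
      j0: "n \<le> j0" "j0 < n+m" "1 \<le> a j0 - (if j0 \<in> F - {c} then 1 else 0)" and
      pos: "\<forall>j\<in>F - {c}. 1 \<le> a j"
      unfolding kface_I0 by blast
    have "(\<lambda>j. a j - (if j \<in> F then 1 else 0)) \<in> monomials (n+m)"
    proof -
      have "\<forall>j\<ge>n+m. j \<notin> F" using Fsub by auto
      then show ?thesis using mon unfolding monomials_def by auto
    qed
    moreover have "1 \<le> a i0 - (if i0 \<in> F then 1 else 0)" using i0 ac cF by (cases "i0 = c") auto
    moreover have "1 \<le> a j0 - (if j0 \<in> F then 1 else 0)" using j0 ac cF by (cases "j0 = c") auto
    moreover have "\<forall>j\<in>F. 1 \<le> a j" using pos ac by auto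
    ultimately show ?thesis unfolding kface_I0 using Fsub i0(1) j0(1,2) by blast
  qed
  ultimately show "kface (n+m) (I0 n m) a F \<and> card F = Suc i" by simp
qed

lemma betti_le1:
  assumes a: "a \<in> monomials (n+m)" and b: "betti_nonzero TYPE('k::field) (n+m) (I0 n m) k a"
  shows "a c \<le> 1"
proof (rule ccontr)
  assume "\<not> a c \<le> 1"
  then have ac: "2 \<le> a c" by simp
  have c: "c < n+m"
  proof (rule ccontr)
    assume "\<not> c < n+m"
    then have "a c = 0" using a unfolding monomials_def by simp
    with ac show False by simp
  qed
  from b obtain z :: "nat set \<Rightarrow> 'k" where z: "z \<in> kchains TYPE('k) (n+m) (I0 n m) a k"
    "kbd (n+m) z = (\<lambda>_. 0)" and nb: "\<not> (\<exists>w\<in>kchains TYPE('k) (n+m) (I0 n m) a (Suc k). kbd (n+m) w = z)"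
    unfolding betti_nonzero_def by blast
  have "Lc c z \<in> kchains TYPE('k) (n+m) (I0 n m) a (Suc k)" by (rule Lc_chains[OF c ac z(1)])
  moreover have "kbd (n+m) (Lc c z) = z" by (rule kbd_Lc[OF c z(2)])
  ultimately show False using nb by blast
qed

lemma betti_face:
  assumes b: "betti_nonzero TYPE('k::field) N M k a"
  shows "\<exists>F. kface N M a F \<and> card F = k"
proof -
  from b obtain z :: "nat set \<Rightarrow> 'k" where z: "z \<in> kchains TYPE('k) N M a k"
    "kbd N z = (\<lambda>_. 0)" and nb: "\<not> (\<exists>w\<in>kchains TYPE('k) N M a (Suc k). kbd N w = z)"
    unfolding betti_nonzero_def by blast
  show ?thesis
  proof (rule ccontr)
    assume "\<not> ?thesis"
    then have nF: "\<And>F. \<not> (kface N M a F \<and> card F = k)" by blast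
    have "z F = 0" for F
    proof (rule ccontr)
      assume "z F \<noteq> 0"
      with z(1) have "kface N M a F \<and> card F = k" unfolding kchains_def by blast
      with nF show False by blast
    qed
    then have "z = (\<lambda>_. 0)" by (rule ext)
    moreover have "(\<lambda>_. 0) \<in> kchains TYPE('k) N M a (Suc k)" unfolding kchains_def by simp
    moreover have "kbd N (\<lambda>_. 0::'k) = (\<lambda>_. 0)" unfolding kbd_def by simp
    ultimately have "\<exists>w\<in>kchains TYPE('k) N M a (Suc k). kbd N w = z" by blast
    with nb show False by blast
  qed
qed

lemma face_sqfree:
  assumes a1: "\<forall>c. a c \<le> 1" and kf: "kface (n+m) (I0 n m) a F"
  shows "F \<subseteq> {..<n+m} \<and> (\<forall>j\<in>F. a j = 1) \<and> (\<exists>p<n. a p = 1 \<and> p \<notin> F) \<and> (\<exists>q. n \<le> q \<and> q < n+m \<and> a q = 1 \<and> q \<notin> F)"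
proof -
  from kf obtain i0 j0 where
      i0: "i0 < n" "1 \<le> a i0 - (if i0 \<in> F then 1 else 0)" and
      j0: "n \<le> j0" "j0 < n+m" "1 \<le> a j0 - (if j0 \<in> F then 1 else 0)" and
      pos: "\<forall>j\<in>F. 1 \<le> a j" and sub: "F \<subseteq> {..<n+m}"
      unfolding kface_I0 by blast
  have "a i0 = 1" "i0 \<notin> F" using i0 a1[rule_format, of i0] by (auto split: if_splits)
  moreover have "a j0 = 1" "j0 \<notin> F" using j0 a1[rule_format, of j0] by (auto split: if_splits)
  moreover have "\<forall>j\<in>F. a j = 1" using pos a1 by (metis le_antisym)
  ultimately show ?thesis using sub i0(1) j0(1,2) by blast
qed

definition ind :: "nat set \<Rightarrow> mon" where
  "ind U = (\<lambda>j. if j \<in> U then 1 else 0)"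

definition Sk :: "nat \<Rightarrow> nat \<Rightarrow> nat \<Rightarrow> mon set" where
  "Sk n m k = {ind U | U. U \<subseteq> {..<n+m} \<and> card U = k+2 \<and> (\<exists>p\<in>U. p<n) \<and> (\<exists>q\<in>U. n\<le>q)}"

lemma betti_gen:
  assumes a: "a \<in> monomials (n+m)" and b: "betti_nonzero TYPE('k::field) (n+m) (I0 n m) k a"
  shows "\<exists>g\<in>Sk n m k. g \<le> a"
proof -
  have a1: "\<forall>c. a c \<le> 1" using betti_le1[OF a b] by blast
  obtain F where F: "kface (n+m) (I0 n m) a F" "card F = k" using betti_face[OF b] by blast
  from face_sqfree[OF a1 F(1)] obtain p q where
    pq: "F \<subseteq> {..<n+m}" "\<forall>j\<in>F. a j = 1" "p<n" "a p = 1" "p \<notin> F" "n \<le> q" "q < n+m" "a q = 1" "q \<notin> F"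
    by blast
  define U where "U = insert p (insert q F)"
  have finF: "finite F" using pq(1) by (rule finite_subset) simp
  have "card U = k+2" unfolding U_def using finF pq F(2) by simp
  moreover have "U \<subseteq> {..<n+m}" unfolding U_def using pq by auto
  moreover have "ind U \<le> a" unfolding U_def ind_def le_fun_def using pq by auto
  ultimately show ?thesis unfolding Sk_def U_def using pq by blast
qed


lemma card3_sorted:
  assumes "card (R::nat set) = 3"
  shows "\<exists>a b c. R = {a,b,c} \<and> a < b \<and> b < c"
proof -
  have fin: "finite R" using assms by (metis card.infinite zero_neq_numeral)
  define L where "L = sorted_list_of_set R"
  have L: "set L = R" "sorted_wrt (<) L" "length L = 3"
    unfolding L_def using fin assms by (auto simp: strict_sorted_list_of_set length_sorted_list_of_set)
  then obtain a b c where "L = [a,b,c]"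
    by (metis length_0_conv length_Suc_conv numeral_3_eq_3)
  with L show ?thesis by auto
qed


definition zU :: "nat \<Rightarrow> nat set \<Rightarrow> nat set \<Rightarrow> 'k::comm_ring_1" where
  "zU n U F = (if F \<subseteq> U \<and> card (U - F) = 2 \<and> (\<exists>p\<in>U-F. p<n) \<and> (\<exists>q\<in>U-F. n\<le>q)
      then (\<Prod>x\<in>U-F. sg U x) else 0)"

lemma zU_cycle:
  assumes finU: "finite U" and UN: "U \<subseteq> {..<N}"
  shows "kbd N (zU n U :: nat set \<Rightarrow> 'k::comm_ring_1) G = 0"
proof (cases "G \<subseteq> U")
  case False
  then show ?thesis unfolding kbd_sg zU_def by (intro sum.neutral) auto
next
  case True
  define R where "R = U - G"
  define f where "f j = sg G j * (zU n U (insert j G) :: 'k)" for j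
  have RN: "R \<subseteq> {..<N} - G" unfolding R_def using UN by auto
  have "kbd N (zU n U :: nat set \<Rightarrow> 'k) G = sum f ({..<N} - G)" unfolding kbd_sg f_def ..
  also have "\<dots> = sum f R"
    by (rule sum.mono_neutral_right) (use RN in \<open>auto simp: f_def zU_def R_def\<close>)
  finally have eq: "kbd N (zU n U :: nat set \<Rightarrow> 'k) G = sum f R" .
  have fj: "f j = sg G j * (if card (R - {j}) = 2 \<and> (\<exists>p\<in>R-{j}. p<n) \<and> (\<exists>q\<in>R-{j}. n\<le>q)
      then (\<Prod>x\<in>R-{j}. sg U x) else 0)" if "j \<in> R" for j
  proof -
    have s1: "(insert j G \<subseteq> U) = True" and s2: "U - insert j G = R - {j}" using that True unfolding R_def by auto
    show ?thesis unfolding f_def zU_def s1 s2 by (simp only: simp_thms)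
  qed
  have finR: "finite R" unfolding R_def using finU by simp
  show ?thesis
  proof (cases "card R = 3")
    case False
    have "f j = 0" if "j \<in> R" for j
    proof -
      have h: "card R = Suc (card (R - {j}))" by (rule card.remove[OF finR that])
      have "card (R - {j}) \<noteq> 2" using h False by linarith
      then show ?thesis using fj[OF that] by simp
    qed
    then show ?thesis unfolding eq by (intro sum.neutral) auto
  next
    case True
    then obtain a b c where R: "R = {a,b,c}" "a < b" "b < c" using card3_sorted by blast
    have U: "U = insert a (insert b (insert c G))" "a \<notin> G" "b \<notin> G" "c \<notin> G"
      using R \<open>G \<subseteq> U\<close> unfolding R_def by auto
    have sga: "sg U a = (sg G a :: 'k)" using U R by (simp add: sg_insert)
    have sgb: "sg U b = - (sg G b :: 'k)" using U R by (simp add: sg_insert)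
    have sgc: "sg U c = (sg G c :: 'k)" using U R by (simp add: sg_insert)
    have Ra: "R - {a} = {b,c}" and Rb: "R - {b} = {a,c}" and Rc: "R - {c} = {a,b}"
      using R by auto
    have mem: "a \<in> R" "b \<in> R" "c \<in> R" using R by auto
    have fa: "f a = (if (b<n \<or> c<n) \<and> (n\<le>b \<or> n\<le>c) then sg G a * (sg U b * sg U c) else 0)"
      using fj[OF mem(1)] unfolding Ra using R by simp
    have fb: "f b = (if (a<n \<or> c<n) \<and> (n\<le>a \<or> n\<le>c) then sg G b * (sg U a * sg U c) else 0)"
      using fj[OF mem(2)] unfolding Rb using R by simp
    have fc: "f c = (if (a<n \<or> b<n) \<and> (n\<le>a \<or> n\<le>b) then sg G c * (sg U a * sg U b) else 0)"
      using fj[OF mem(3)] unfolding Rc using R by simp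
    have "sum f R = f a + f b + f c" using R by simp
    also have "\<dots> = 0"
      unfolding fa fb fc sga sgb sgc
      using R
      by (cases "c < n"; cases "b < n"; cases "a < n") (auto simp: algebra_simps)
    finally show ?thesis using eq by simp
  qed
qed


lemma ind_le1: "ind U c \<le> 1" unfolding ind_def by simp

lemma Sk_betti:
  assumes UN: "U \<subseteq> {..<n+m}" and cU: "card U = k+2" and p: "p \<in> U" "p < n" and q: "q \<in> U" "n \<le> q"
  shows "betti_nonzero TYPE('k::field) (n+m) (I0 n m) k (ind U)"
proof -
  define z where "z = (zU n U :: nat set \<Rightarrow> 'k)"
  have finU: "finite U" using UN by (rule finite_subset) simp
  have zc: "z \<in> kchains TYPE('k) (n+m) (I0 n m) (ind U) k"
    unfolding kchains_def
  proof (intro CollectI allI impI)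
    fix F assume "z F \<noteq> 0"
    then have F: "F \<subseteq> U" "card (U - F) = 2" and ex: "\<exists>p\<in>U-F. p<n" "\<exists>q\<in>U-F. n\<le>q"
      unfolding z_def zU_def by (auto split: if_splits)
    have finF: "finite F" using F(1) finU by (rule finite_subset)
    have "card (U - F) = card U - card F" using finF F(1) by (rule card_Diff_subset)
    then have "card F = k" using F(2) cU card_mono[OF finU F(1)] by linarith
    moreover have "kface (n+m) (I0 n m) (ind U) F"
      unfolding kface_I0
    proof (intro conjI)
      show "F \<subseteq> {..<n+m}" using F(1) UN by auto
      show "\<forall>j\<in>F. 1 \<le> ind U j" using F(1) by (auto simp: ind_def)
      show "(\<lambda>j. ind U j - (if j \<in> F then 1 else 0)) \<in> monomials (n+m)"
        using UN by (auto simp: ind_def monomials_def)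
      show "\<exists>i<n. 1 \<le> ind U i - (if i \<in> F then 1 else 0)" using ex(1) by (auto simp: ind_def)
      show "\<exists>j. n \<le> j \<and> j < n+m \<and> 1 \<le> ind U j - (if j \<in> F then 1 else 0)"
        using ex(2) UN by (auto simp: ind_def)
    qed
    ultimately show "kface (n+m) (I0 n m) (ind U) F \<and> card F = k" by simp
  qed
  have zcyc: "kbd (n+m) z = (\<lambda>_. 0)"
    unfolding z_def by (rule ext) (rule zU_cycle[OF finU UN])
  have pq: "p \<noteq> q" using p q by simp
  have znz: "z (U - {p,q}) \<noteq> 0"
  proof -
    have e: "U - (U - {p,q}) = {p,q}" using p q by auto
    have "z (U - {p,q}) = sg U p * sg U q"
      unfolding z_def zU_def e using p q pq by auto
    then show ?thesis using sg_nz[of U p] sg_nz[of U q] by simp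
  qed
  have nb: "\<not> (\<exists>w\<in>kchains TYPE('k) (n+m) (I0 n m) (ind U) (Suc k). kbd (n+m) w = z)"
  proof
    assume "\<exists>w\<in>kchains TYPE('k) (n+m) (I0 n m) (ind U) (Suc k). kbd (n+m) w = z"
    then obtain w where w: "w \<in> kchains TYPE('k) (n+m) (I0 n m) (ind U) (Suc k)" "kbd (n+m) w = z" by blast
    have "w F = 0" for F
    proof (rule ccontr)
      assume "w F \<noteq> 0"
      with w(1) have kf: "kface (n+m) (I0 n m) (ind U) F" and cF: "card F = Suc k"
        unfolding kchains_def by auto
      from face_sqfree[OF _ kf] obtain p0 q0 where
        pq0: "\<forall>j\<in>F. ind U j = 1" "p0 < n" "ind U p0 = 1" "p0 \<notin> F" "n \<le> q0" "ind U q0 = 1" "q0 \<notin> F"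
        using ind_le1 by blast
      have indU: "ind U j = 1 \<Longrightarrow> j \<in> U" for j unfolding ind_def by (cases "j \<in> U") auto
      have pU: "p0 \<in> U" "q0 \<in> U" using indU pq0(3,6) by auto
      have "F \<subseteq> U" using indU pq0(1) by blast
      then have "F \<subseteq> U - {p0, q0}" using pq0(4,7) by blast
      then have "card F \<le> card (U - {p0,q0})" using finU by (intro card_mono) auto
      moreover have "card (U - {p0,q0}) = card U - card {p0,q0}"
        using pU by (intro card_Diff_subset) auto
      moreover have "card {p0,q0} = 2" using pq0(2,5) by simp
      ultimately show False using cF cU by simp
    qed
    then have "w = (\<lambda>_. 0)" by (rule ext)
    then have "z = (\<lambda>_. 0)" using w(2) unfolding kbd_def by simp
    with znz show False by simp
  qed
  show ?thesis unfolding betti_nonzero_def using zc zcyc nb by blast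
qed


lemma Sk_elem: "g \<in> Sk n m k \<longleftrightarrow> (\<exists>U. g = ind U \<and> U \<subseteq> {..<n+m} \<and> card U = k+2 \<and> (\<exists>p\<in>U. p<n) \<and> (\<exists>q\<in>U. n\<le>q))"
  unfolding Sk_def by blast

lemma ind_mon: "U \<subseteq> {..<N} \<Longrightarrow> ind U \<in> monomials N"
  unfolding ind_def monomials_def by auto

lemma ind_le_iff: "ind U \<le> ind V \<longleftrightarrow> U \<subseteq> V"
  unfolding ind_def le_fun_def by (auto split: if_splits)

lemma Sk_mon: "Sk n m k \<subseteq> monomials (n+m)"
  unfolding Sk_def using ind_mon by blast

lemma HS_eq: "HS TYPE('k::field) (n+m) (I0 n m) k = mideal (n+m) (Sk n m k)"
proof
  show "HS TYPE('k) (n+m) (I0 n m) k \<subseteq> mideal (n+m) (Sk n m k)"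
  proof
    fix x assume "x \<in> HS TYPE('k) (n+m) (I0 n m) k"
    then obtain b where x: "x \<in> monomials (n+m)" "b \<in> monomials (n+m)"
      "betti_nonzero TYPE('k) (n+m) (I0 n m) k b" "b \<le> x"
      unfolding HS_def mideal_def by blast
    obtain g where "g \<in> Sk n m k" "g \<le> b" using betti_gen[OF x(2,3)] by blast
    then show "x \<in> mideal (n+m) (Sk n m k)" unfolding mideal_def using x order_trans by blast
  qed
next
  show "mideal (n+m) (Sk n m k) \<subseteq> HS TYPE('k) (n+m) (I0 n m) k"
  proof
    fix x assume "x \<in> mideal (n+m) (Sk n m k)"
    then obtain g where x: "x \<in> monomials (n+m)" "g \<in> Sk n m k" "g \<le> x"
      unfolding mideal_def by blast
    from x(2) obtain U where U: "g = ind U" "U \<subseteq> {..<n+m}" "card U = k+2" "\<exists>p\<in>U. p<n" "\<exists>q\<in>U. n\<le>q"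
      unfolding Sk_elem by blast
    have "betti_nonzero TYPE('k) (n+m) (I0 n m) k g"
      using U Sk_betti[OF U(2,3)] by blast
    moreover have "g \<in> monomials (n+m)" using x(2) Sk_mon by blast
    ultimately show "x \<in> HS TYPE('k) (n+m) (I0 n m) k" unfolding HS_def mideal_def using x by blast
  qed
qed

lemma Sk_eq:
  assumes "g \<in> Sk n m k" "h \<in> Sk n m k" "g \<le> h" shows "g = h"
proof -
  from assms(1) obtain U where U: "g = ind U" "U \<subseteq> {..<n+m}" "card U = k+2" unfolding Sk_elem by blast
  from assms(2) obtain V where V: "h = ind V" "V \<subseteq> {..<n+m}" "card V = k+2" unfolding Sk_elem by blast
  have "U \<subseteq> V" using assms(3) U V ind_le_iff by blast
  moreover have "finite V" using V(2) by (rule finite_subset) simp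
  ultimately have "U = V" using U(3) V(3) by (metis card_subset_eq)
  then show ?thesis using U V by simp
qed

lemma mingens_Sk: "mingens (mideal (n+m) (Sk n m k)) = Sk n m k"
proof
  show "mingens (mideal (n+m) (Sk n m k)) \<subseteq> Sk n m k"
  proof
    fix u assume u: "u \<in> mingens (mideal (n+m) (Sk n m k))"
    then obtain g where g: "g \<in> Sk n m k" "g \<le> u" unfolding mingens_def mideal_def by blast
    have "g \<in> mideal (n+m) (Sk n m k)" unfolding mideal_def using g Sk_mon by blast
    then have "g = u" using u g(2) unfolding mingens_def by blast
    then show "u \<in> Sk n m k" using g by simp
  qed
next
  show "Sk n m k \<subseteq> mingens (mideal (n+m) (Sk n m k))"
  proof
    fix u assume u: "u \<in> Sk n m k"
    have um: "u \<in> mideal (n+m) (Sk n m k)" unfolding mideal_def using u Sk_mon by blast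
    have "v = u" if "v \<in> mideal (n+m) (Sk n m k)" "v \<le> u" for v
    proof -
      from that obtain g where g: "g \<in> Sk n m k" "g \<le> v" unfolding mideal_def by blast
      then have "g = u" using Sk_eq[OF g(1) u] that(2) order_trans by blast
      then show ?thesis using g(2) that(2) by simp
    qed
    then show "u \<in> mingens (mideal (n+m) (Sk n m k))" unfolding mingens_def using um by blast
  qed
qed


lemma side:
  assumes finU: "finite U" and finV: "finite V" and cc: "card U = card V"
    and t: "t \<in> V" "t \<notin> U" "\<not> Q t" and qU: "\<exists>q\<in>U. Q q" and qV: "\<exists>q\<in>V. Q q"
  shows "\<exists>s\<in>U-V. \<exists>q\<in>U-{s}. Q q"
proof -
  have cd: "card (U - V) = card (V - U)"
    using cc finU finV card_Diff_subset_Int[of U V] card_Diff_subset_Int[of V U]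
    by (simp add: Int_commute)
  have finVU: "finite (V - U)" using finV by simp
  have finUV: "finite (U - V)" using finU by simp
  have "card (V - U) \<ge> 1" using t finVU by (metis One_nat_def Suc_leI card_gt_0_iff DiffI empty_iff)
  then have "card (U - V) \<ge> 1" using cd by simp
  then have "U - V \<noteq> {}" by (metis card.empty not_one_le_zero)
  then obtain s where s: "s \<in> U - V" by blast
  show ?thesis
  proof (cases "\<exists>s\<in>U-V. \<not> Q s")
    case True
    then obtain s' where s': "s' \<in> U - V" "\<not> Q s'" by blast
    obtain q where "q \<in> U" "Q q" using qU by blast
    then have "q \<in> U - {s'}" "Q q" using s' by auto
    then show ?thesis using s'(1) by blast
  next
    case False
    then have allQ: "\<forall>s\<in>U-V. Q s" by blast
    show ?thesis
    proof (rule ccontr)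
      assume nex: "\<not> ?thesis"
      then have noq: "\<forall>q\<in>U-{s}. \<not> Q q" using s by blast
      obtain q' where q': "q' \<in> V" "Q q'" using qV by blast
      have "q' \<notin> U" using noq q' s by auto
      then have "{t, q'} \<subseteq> V - U" using t q' by auto
      moreover have "t \<noteq> q'" using t q' by auto
      ultimately have "card (V - U) \<ge> 2" using finVU
        by (metis card_2_iff card_mono)
      then have "card (U - V) \<ge> 2" using cd by simp
      moreover have "U - V \<subseteq> {s}"
      proof
        fix x assume "x \<in> U - V"
        then have "Q x" using allQ by blast
        then show "x \<in> {s}" using noq \<open>x \<in> U - V\<close> by auto
      qed
      then have "card (U - V) \<le> 1" using card_mono[of "{s}" "U - V"] by simp
      ultimately show False by simp
    qed
  qed
qed


lemma exchange:
  assumes \<sigma>: "bij_betw \<sigma> {..<N} {..<N}" and UN: "U \<subseteq> {..<N}" and VN: "V \<subseteq> {..<N}"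
    and cc: "card U = card V"
    and pU: "\<exists>p\<in>U. p<n" and qU: "\<exists>q\<in>U. n\<le>q" and pV: "\<exists>p\<in>V. p<n" and qV: "\<exists>q\<in>V. n\<le>q"
    and lex: "lex_gt N \<sigma> (ind V) (ind U)"
  shows "\<exists>t s. t \<in> V \<and> t \<notin> U \<and> s \<in> U \<and> s \<notin> V \<and> (\<exists>p\<in>insert t (U-{s}). p<n) \<and>
     (\<exists>q\<in>insert t (U-{s}). n\<le>q) \<and> lex_gt N \<sigma> (ind (insert t (U - {s}))) (ind U)"
proof -
  from lex obtain k0 where k0: "k0 < N" "ind U (\<sigma> k0) < ind V (\<sigma> k0)"
    "\<forall>i<k0. ind V (\<sigma> i) = ind U (\<sigma> i)" unfolding lex_gt_def by blast
  define t where "t = \<sigma> k0"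
  have t: "t \<in> V" "t \<notin> U" using k0(2) unfolding t_def ind_def by (auto split: if_splits)
  have inj: "inj_on \<sigma> {..<N}" using \<sigma> by (rule bij_betw_imp_inj_on)
  have lexs: "lex_gt N \<sigma> (ind (insert t (U - {s}))) (ind U)" if s: "s \<in> U" "s \<notin> V" for s
    unfolding lex_gt_def
  proof (intro exI[of _ k0] conjI allI impI)
    show "k0 < N" by (rule k0(1))
    show "ind U (\<sigma> k0) < ind (insert t (U - {s})) (\<sigma> k0)" using t unfolding t_def ind_def by simp
    fix i assume i: "i < k0"
    have "\<sigma> i \<noteq> t" using inj i k0(1) unfolding t_def inj_on_def by (metis lessThan_iff less_trans less_irrefl)
    moreover have "\<sigma> i \<noteq> s" using k0(3) i s unfolding ind_def by force
    ultimately show "ind (insert t (U - {s})) (\<sigma> i) = ind U (\<sigma> i)" unfolding ind_def by auto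
  qed
  have finU: "finite U" using UN by (rule finite_subset) simp
  have finV: "finite V" using VN by (rule finite_subset) simp
  show ?thesis
  proof (cases "t < n")
    case True
    obtain s q where "s \<in> U - V" "q \<in> U - {s}" "n \<le> q"
      using side[OF finU finV cc t(1,2), of "\<lambda>x. n \<le> x"] True qU qV by auto
    then show ?thesis using t True lexs by (intro exI[of _ t] exI[of _ s]) auto
  next
    case False
    obtain s q where "s \<in> U - V" "q \<in> U - {s}" "q < n"
      using side[OF finU finV cc t(1,2), of "\<lambda>x. x < n"] False pU pV by auto
    then show ?thesis using t False lexs by (intro exI[of _ t] exI[of _ s]) auto
  qed
qed

theorem mainTheorem8:
  fixes n m k :: nat and \<sigma> :: "nat \<Rightarrow> nat"
  assumes "0 < n" and "0 < m"
    and "bij_betw \<sigma> {..<n+m} {..<n+m}"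
  shows "has_linear_quotients (n+m) \<sigma>
           (HS TYPE('k::field) (n+m)
              (mideal (n+m) {(\<lambda>l. var_mon i l + var_mon j l) | i j. i < n \<and> n \<le> j \<and> j < n+m})
              k)"
  unfolding has_linear_quotients_def HS_eq mingens_Sk
proof
  fix u assume u: "u \<in> Sk n m k"
  then obtain U where U: "u = ind U" "U \<subseteq> {..<n+m}" "card U = k+2" "\<exists>p\<in>U. p<n" "\<exists>q\<in>U. n\<le>q"
    unfolding Sk_elem by blast
  have umon: "u \<in> monomials (n+m)" using u Sk_mon by blast
  define G0 where "G0 = {v \<in> Sk n m k. lex_gt (n+m) \<sigma> v u}"
  define C where "C = mcolon (n+m) (mideal (n+m) G0) u"
  define S where "S = {t. t < n+m \<and> var_mon t \<in> C}"
  have "C = mideal (n+m) (var_mon ` S)"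
  proof
    show "mideal (n+m) (var_mon ` S) \<subseteq> C"
    proof
      fix w assume "w \<in> mideal (n+m) (var_mon ` S)"
      then obtain t where w: "w \<in> monomials (n+m)" "t \<in> S" "var_mon t \<le> w"
        unfolding mideal_def by blast
      then have "(\<lambda>j. var_mon t j + u j) \<in> mideal (n+m) G0" unfolding S_def C_def mcolon_def by blast
      then obtain g where g: "g \<in> G0" "g \<le> (\<lambda>j. var_mon t j + u j)" unfolding mideal_def by blast
      have "g \<le> (\<lambda>j. w j + u j)" using g(2) w(3) unfolding le_fun_def
        by (metis add_le_mono order_refl order_trans)
      moreover have "(\<lambda>j. w j + u j) \<in> monomials (n+m)" using w(1) umon unfolding monomials_def by simp
      ultimately show "w \<in> C" unfolding C_def mcolon_def mideal_def using w(1) g(1) by blast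
    qed
  next
    show "C \<subseteq> mideal (n+m) (var_mon ` S)"
    proof
      fix w assume "w \<in> C"
      then obtain v where w: "w \<in> monomials (n+m)" "v \<in> G0" "v \<le> (\<lambda>j. w j + u j)"
        unfolding C_def mcolon_def mideal_def by blast
      from w(2) obtain V where V: "v = ind V" "V \<subseteq> {..<n+m}" "card V = k+2" "\<exists>p\<in>V. p<n" "\<exists>q\<in>V. n\<le>q"
        "lex_gt (n+m) \<sigma> (ind V) (ind U)"
        unfolding G0_def Sk_elem using U(1) by blast
      obtain t s where ts: "t \<in> V" "t \<notin> U" "s \<in> U" "s \<notin> V" "\<exists>p\<in>insert t (U-{s}). p<n"
        "\<exists>q\<in>insert t (U-{s}). n\<le>q" "lex_gt (n+m) \<sigma> (ind (insert t (U - {s}))) (ind U)"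
        using exchange[OF assms(3) U(2) V(2) _ U(4,5) V(4,5,6)] U(3) V(3) by auto
      have tN: "t < n+m" using ts(1) V(2) by auto
      have wt: "1 \<le> w t" using w(3) ts(1,2) unfolding V(1) U(1) le_fun_def ind_def
        by (metis add_0_right)
      define U' where "U' = insert t (U - {s})"
      have finU: "finite U" using U(2) by (rule finite_subset) simp
      have "card U' = k+2" unfolding U'_def using finU ts U(3) by (simp add: card_Diff_singleton)
      moreover have "U' \<subseteq> {..<n+m}" unfolding U'_def using U(2) tN by auto
      ultimately have U'S: "ind U' \<in> Sk n m k" unfolding Sk_elem using ts(5,6) unfolding U'_def by blast
      have "ind U' \<in> G0" unfolding G0_def using U'S ts(7) U(1) unfolding U'_def by blast
      moreover have "ind U' \<le> (\<lambda>j. var_mon t j + u j)"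
        unfolding U'_def U(1) le_fun_def ind_def var_mon_def by auto
      moreover have "(\<lambda>j. var_mon t j + u j) \<in> monomials (n+m)"
        using umon tN unfolding monomials_def var_mon_def by auto
      moreover have "var_mon t \<in> monomials (n+m)" using tN unfolding monomials_def var_mon_def by auto
      ultimately have "var_mon t \<in> C" unfolding C_def mcolon_def mideal_def by blast
      then have "t \<in> S" unfolding S_def using tN by blast
      moreover have "var_mon t \<le> w" using wt unfolding le_fun_def var_mon_def by auto
      ultimately show "w \<in> mideal (n+m) (var_mon ` S)" unfolding mideal_def using w(1) by blast
    qed
  qed
  moreover have "S \<subseteq> {..<n+m}" unfolding S_def by auto
  ultimately show "generated_by_variables (n+m) (mcolon (n+m) (mideal (n+m) {v \<in> Sk n m k. lex_gt (n+m) \<sigma> v u}) u)"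
    unfolding generated_by_variables_def C_def G0_def by blast
qed

end
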